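(* Let $A=(V_\exists,V_\forall,E,E_f)$ be a fair game arena and $\alpha$ an $\omega$-regular winning condition over $V$. For every $v\in V$, if $$\exists s\in\Sigma.\,\forall t\in\Pi.\,\mathsf{fair}_\exists(\mathsf{play}_v(s,t))\wedge\big(\mathsf{fair}_\forall(\mathsf{play}_v(s,t))\Rightarrow\mathsf{play}_v(s,t)\in\alpha\big)$$ holds, then $$\exists s\in\Sigma.\,\forall t\in\Pi.\,\mathsf{fair}_\forall(\mathsf{play}_v(s,t))\Rightarrow\big(\mathsf{fair}_\exists(\mathsf{play}_v(s,t))\wedge\mathsf{play}_v(s,t)\in\alpha\big)$$ holds. Moreover, the converse fails in general: there exist a fair game arena, an $\omega$-regular condition $\alpha$ and a node $v$ satisfying the second formula but not the first.
   Context: A fair game arena $A=(V_\exists,V_\forall,E,E_f)$: finite node set $V=V_\exists\cup V_\forall$ (disjoint), right-total moves $E\subseteq V\times V$, fair moves $E_f\subseteq E$. A play is an infinite sequence $\tau=v_0v_1\ldots$ with $(v_j,v_{j+1})\in E$; $\tau_m$ is its sequence of moves; $\mathsf{Inf}$ denotes the set of elements occurring infinitely often. For $i\in\{\exists,\forall\}$, $\tau$ is $i$-fair ($\mathsf{fair}_i(\tau)$) if for all $u\in V_i\cap\mathsf{Inf}(\tau)$, every $(u,u')\in E_f$ is in $\mathsf{Inf}(\tau_m)$. A strategy for player $i$ is a function $p:V^*\cdot V_i\to V$ with $p(w\cdot u)\in E(u)$; $\Sigma$ ($\Pi$) is the set of strategies of $\exists$ ($\forall$); $\mathsf{play}_v(s,t)$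 is the unique play from $v$ compliant with $s$ and $t$. An $\omega$-regular winning condition is an $\omega$-regular language $\alpha\subseteq V^\omega$. *)

theory Defs
  imports Main
begin

definition fair_arena :: "'v set \<Rightarrow> 'v set \<Rightarrow> ('v \<times> 'v) set \<Rightarrow> ('v \<times> 'v) set \<Rightarrow> bool" where
  "fair_arena VE VA E Ef \<longleftrightarrow>
     finite (VE \<union> VA) \<and> VE \<inter> VA = {} \<and>
     E \<subseteq> (VE \<union> VA) \<times> (VE \<union> VA) \<and>
     (\<forall>u \<in> VE \<union> VA. \<exists>u'. (u, u') \<in> E) \<and>
     Ef \<subseteq> E"

definition strategy :: "'v set \<Rightarrow> ('v \<times> 'v) set \<Rightarrow> ('v list \<Rightarrow> 'v) \<Rightarrow> bool" where
  "strategy Vi E p \<longleftrightarrow> (\<forall>w u. u \<in> Vi \<longrightarrow> (u, p (w @ [u])) \<in> E)"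

fun hist :: "'v set \<Rightarrow> ('v list \<Rightarrow> 'v) \<Rightarrow> ('v list \<Rightarrow> 'v) \<Rightarrow> 'v \<Rightarrow> nat \<Rightarrow> 'v list" where
  "hist VE s t v 0 = [v]"
| "hist VE s t v (Suc n) =
     (let h = hist VE s t v n in h @ [if last h \<in> VE then s h else t h])"

definition play :: "'v set \<Rightarrow> ('v list \<Rightarrow> 'v) \<Rightarrow> ('v list \<Rightarrow> 'v) \<Rightarrow> 'v \<Rightarrow> nat \<Rightarrow> 'v" where
  "play VE s t v n = last (hist VE s t v n)"

definition infset :: "(nat \<Rightarrow> 'a) \<Rightarrow> 'a set" where
  "infset \<tau> = {x. infinite {n. \<tau> n = x}}"

definition moves :: "(nat \<Rightarrow> 'v) \<Rightarrow> nat \<Rightarrow> 'v \<times> 'v" where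
  "moves \<tau> n = (\<tau> n, \<tau> (Suc n))"

definition fair :: "'v set \<Rightarrow> ('v \<times> 'v) set \<Rightarrow> (nat \<Rightarrow> 'v) \<Rightarrow> bool" where
  "fair Vi Ef \<tau> \<longleftrightarrow>
     (\<forall>u \<in> Vi \<inter> infset \<tau>. \<forall>u'. (u, u') \<in> Ef \<longrightarrow> (u, u') \<in> infset (moves \<tau>))"

definition buchi_lang :: "'q set \<Rightarrow> 'q set \<Rightarrow> ('q \<times> 'a \<times> 'q) set \<Rightarrow> 'q set \<Rightarrow> (nat \<Rightarrow> 'a) set" where
  "buchi_lang Q I \<delta> F =
     {w. \<exists>r. r 0 \<in> I \<and> (\<forall>i. r i \<in> Q \<and> (r i, w i, r (Suc i)) \<in> \<delta>) \<and> infinite {i. r i \<in> F}}"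

definition omega_regular :: "'a set \<Rightarrow> (nat \<Rightarrow> 'a) set \<Rightarrow> bool" where
  "omega_regular V \<alpha> \<longleftrightarrow>
     \<alpha> \<subseteq> {w. \<forall>i. w i \<in> V} \<and>
     (\<exists>(Q :: nat set) I \<delta> F. finite Q \<and> I \<subseteq> Q \<and> F \<subseteq> Q \<and> \<alpha> = buchi_lang Q I \<delta> F)"

end

theory Submission
  imports Defs
begin

lemma hist_nonempty: "hist VE s t v n \<noteq> []"
  by (cases n) (auto simp: Let_def)

lemma hist_snoc: "hist VE s t v n = butlast (hist VE s t v n) @ [play VE s t v n]"
  unfolding play_def using hist_nonempty by (metis append_butlast_last_id)

lemma play_0: "play VE s t v 0 = v"
  by (simp add: play_def)

lemma play_Suc: "play VE s t v (Suc n) =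
   (if play VE s t v n \<in> VE then s (butlast (hist VE s t v n) @ [play VE s t v n])
    else t (butlast (hist VE s t v n) @ [play VE s t v n]))"
proof -
  have "hist VE s t v n = butlast (hist VE s t v n) @ [last (hist VE s t v n)]"
    using hist_nonempty by (metis append_butlast_last_id)
  then show ?thesis by (simp add: play_def Let_def)
qed

definition EEx :: "(nat \<times> nat) set" where "EEx = {(0,1),(0,2),(1,0),(1,3),(2,2),(3,3)}"
definition EfEx :: "(nat \<times> nat) set" where "EfEx = {(0,1),(0,2),(1,0),(1,3)}"
definition alEx :: "(nat \<Rightarrow> nat) set" where "alEx = {w. \<forall>i. w i \<in> {0,1,2}}"
definition sEx :: "nat list \<Rightarrow> nat" where "sEx h = (if last h = 1 then 0 else last h)"

lemma arena_ex: "fair_arena {1,2,3} {0} EEx EfEx"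
  unfolding fair_arena_def EEx_def EfEx_def by auto

lemma omega_ex: "omega_regular ({1,2,3} \<union> {0}) alEx"
proof -
  have "alEx = buchi_lang {0} {0} ({0::nat} \<times> ({0::nat,1,2} \<times> {0::nat})) {0::nat}"
    unfolding alEx_def buchi_lang_def
  proof (intro set_eqI iffI)
    fix w :: "nat \<Rightarrow> nat" assume "w \<in> {w. \<forall>i. w i \<in> {0,1,2}}"
    then have "\<forall>i. w i \<in> {0,1,2}" by simp
    then show "w \<in> {w. \<exists>r. r 0 \<in> {0} \<and> (\<forall>i. r i \<in> {0} \<and> (r i, w i, r (Suc i)) \<in> {0::nat} \<times> ({0::nat,1,2} \<times> {0::nat})) \<and> infinite {i. r i \<in> {0::nat}}}"
      by (intro CollectI exI[of _ "\<lambda>_. 0"]) simp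
  next
    fix w :: "nat \<Rightarrow> nat"
    assume "w \<in> {w. \<exists>r. r 0 \<in> {0} \<and> (\<forall>i. r i \<in> {0} \<and> (r i, w i, r (Suc i)) \<in> {0::nat} \<times> ({0::nat,1,2} \<times> {0::nat})) \<and> infinite {i. r i \<in> {0::nat}}}"
    then obtain r :: "nat \<Rightarrow> nat" where "\<forall>i. (r i, w i, r (Suc i)) \<in> {0::nat} \<times> ({0::nat,1,2} \<times> {0::nat})"
      unfolding mem_Collect_eq by metis
    then have "\<forall>i. w i \<in> {0,1,2}" by (simp add: mem_Times_iff) blast
    then show "w \<in> {w. \<forall>i. w i \<in> {0,1,2}}" by simp
  qed
  moreover have "alEx \<subseteq> {w. \<forall>i. w i \<in> {1,2,3} \<union> {0}}" unfolding alEx_def by blast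
  ultimately show ?thesis unfolding omega_regular_def
    by (intro conjI exI[of _ "{0::nat}"] exI[of _ "{0::nat}"] exI[of _ "{0::nat} \<times> ({0::nat,1,2} \<times> {0::nat})"]) simp_all
qed

lemma strat_s: "strategy {1,2,3} EEx sEx"
  unfolding strategy_def EEx_def sEx_def by auto

lemma stay: assumes "play VE s t v m = x" "\<And>n. play VE s t v n = x \<Longrightarrow> play VE s t v (Suc n) = x"
  shows "n \<ge> m \<Longrightarrow> play VE s t v n = x"
  by (induction n rule: dec_induct[of m]) (use assms in auto)

lemma fin_before: assumes "play VE s t v m = x" "\<And>n. play VE s t v n = x \<Longrightarrow> play VE s t v (Suc n) = x"
  "y \<noteq> x" shows "finite {n. play VE s t v n = y}"
proof -
  have "{n. play VE s t v n = y} \<subseteq> {..<m}"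
    using stay[OF assms(1,2)] assms(3) by (auto simp: not_less[symmetric])
  then show ?thesis using finite_subset by blast
qed

lemma part2_pos:
  assumes t: "strategy {0} EEx t"
  shows "fair {0} EfEx (play {1,2,3} sEx t 0) \<longrightarrow> fair {1,2,3} EfEx (play {1,2,3} sEx t 0) \<and> play {1,2,3} sEx t 0 \<in> alEx"
proof
  let ?p = "play {1,2,3} sEx t (0::nat)"
  assume fA: "fair {0} EfEx ?p"
  have t0: "t (w @ [0]) \<in> {1,2}" for w using t unfolding strategy_def EEx_def by auto
  have st0: "?p n = 0 \<Longrightarrow> ?p (Suc n) \<in> {1,2}" for n
    using t0 by (subst play_Suc) auto
  have st1: "?p n = 1 \<Longrightarrow> ?p (Suc n) = 0" for n
    by (subst play_Suc) (auto simp: sEx_def)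
  have s2: "?p n = 2 \<Longrightarrow> ?p (Suc n) = 2" for n
    by (subst play_Suc) (auto simp: sEx_def)
  have rng: "?p n \<in> {0,1,2}" for n
  proof (induction n)
    case 0 then show ?case by (simp add: play_0)
  next
    case (Suc n) then show ?case using st0[of n] st1[of n] s2[of n] by blast
  qed
  have n0: "0 \<notin> infset ?p"
  proof
    assume a: "0 \<in> infset ?p"
    then have "(0,2) \<in> infset (moves ?p)" using fA unfolding fair_def EfEx_def by auto
    then have "infinite {n. moves ?p n = (0,2)}" by (simp add: infset_def)
    then obtain m where "moves ?p m = (0,2)" by (metis (mono_tags, lifting) empty_Collect_eq finite.emptyI)
    then have "?p (Suc m) = 2" by (simp add: moves_def)
    from fin_before[OF this s2] have "finite {n. ?p n = 0}" by simp
    with a show False by (simp add: infset_def)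
  qed
  have n1: "1 \<notin> infset ?p"
  proof
    assume a: "1 \<in> infset ?p"
    have "Suc ` {n. ?p n = 1} \<subseteq> {n. ?p n = 0}" using st1 by auto
    moreover have "finite {n. ?p n = 0}" using n0 by (simp add: infset_def)
    ultimately have "finite (Suc ` {n. ?p n = 1})" using finite_subset by blast
    then have "finite {n. ?p n = 1}" using finite_imageD inj_Suc by (metis inj_on_subset subset_UNIV)
    with a show False by (simp add: infset_def)
  qed
  show "fair {1,2,3} EfEx ?p \<and> ?p \<in> alEx"
  proof
    show "fair {1,2,3} EfEx ?p" unfolding fair_def EfEx_def using n1 by auto
    show "?p \<in> alEx" unfolding alEx_def using rng by auto
  qed
qed

lemma part2_neg:
  assumes s: "strategy {1,2,3} EEx s"
  shows "\<exists>t. strategy {0} EEx t \<and> \<not> (fair {1,2,3} EfEx (play {1,2,3} s t 0) \<and>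
     (fair {0} EfEx (play {1,2,3} s t 0) \<longrightarrow> play {1,2,3} s t 0 \<in> alEx))"
proof (intro exI[of _ "\<lambda>_. 1"] conjI)
  show "strategy {0} EEx (\<lambda>_. 1)" unfolding strategy_def EEx_def by auto
  let ?p = "play {1,2,3} s (\<lambda>_. 1) (0::nat)"
  have s1: "s (w @ [1]) \<in> {0,3}" for w using s unfolding strategy_def EEx_def by auto
  have s3: "s (w @ [3]) = 3" for w using s unfolding strategy_def EEx_def by auto
  have st0: "?p n = 0 \<Longrightarrow> ?p (Suc n) = 1" for n by (subst play_Suc) auto
  have st1: "?p n = 1 \<Longrightarrow> ?p (Suc n) \<in> {0,3}" for n using s1 by (subst play_Suc) auto
  have st3: "?p n = 3 \<Longrightarrow> ?p (Suc n) = 3" for n using s3 by (subst play_Suc) auto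
  show "\<not> (fair {1,2,3} EfEx ?p \<and> (fair {0} EfEx ?p \<longrightarrow> ?p \<in> alEx))"
  proof (cases "\<exists>m. ?p m = 3")
    case True
    then obtain m where m: "?p m = 3" by blast
    have "finite {n. ?p n = 0}" using fin_before[OF m st3] by simp
    then have "fair {0} EfEx ?p" unfolding fair_def infset_def by auto
    moreover have "?p m \<notin> {0,1,2}" using m by simp
    then have "?p \<notin> alEx" unfolding alEx_def by blast
    ultimately show ?thesis by blast
  next
    case False
    have rng: "?p n \<in> {0,1}" for n
    proof (induction n)
      case 0 then show ?case by (simp add: play_0)
    next
      case (Suc n) then show ?case using st0[of n] st1[of n] False by blast
    qed
    have "\<exists>n\<ge>m. ?p n = 1" for m
      using rng[of m] st0[of m] by (metis le_Suc_eq insertE singletonD order_refl)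
    then have "1 \<in> infset ?p" unfolding infset_def finite_nat_set_iff_bounded by (auto simp: not_less)
    moreover have "(1,3) \<notin> infset (moves ?p)"
      unfolding infset_def moves_def using False by simp
    ultimately have "\<not> fair {1,2,3} EfEx ?p" unfolding fair_def EfEx_def by auto
    then show ?thesis by blast
  qed
qed

theorem lemma4:
  shows "(\<forall>(VE :: 'v set) VA E Ef \<alpha> v.
            fair_arena VE VA E Ef \<and> omega_regular (VE \<union> VA) \<alpha> \<and> v \<in> VE \<union> VA \<longrightarrow>
            (\<exists>s. strategy VE E s \<and> (\<forall>t. strategy VA E t \<longrightarrow>
                fair VE Ef (play VE s t v) \<and> (fair VA Ef (play VE s t v) \<longrightarrow> play VE s t v \<in> \<alpha>)))
            \<longrightarrow>
            (\<exists>s. strategy VE E s \<and> (\<forall>t. strategy VA E t \<longrightarrow>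
                fair VA Ef (play VE s t v) \<longrightarrow> fair VE Ef (play VE s t v) \<and> play VE s t v \<in> \<alpha>)))
       \<and>
       (\<exists>(VE :: nat set) VA E Ef \<alpha> v.
            fair_arena VE VA E Ef \<and> omega_regular (VE \<union> VA) \<alpha> \<and> v \<in> VE \<union> VA \<and>
            (\<exists>s. strategy VE E s \<and> (\<forall>t. strategy VA E t \<longrightarrow>
                fair VA Ef (play VE s t v) \<longrightarrow> fair VE Ef (play VE s t v) \<and> play VE s t v \<in> \<alpha>)) \<and>
            \<not> (\<exists>s. strategy VE E s \<and> (\<forall>t. strategy VA E t \<longrightarrow>
                fair VE Ef (play VE s t v) \<and> (fair VA Ef (play VE s t v) \<longrightarrow> play VE s t v \<in> \<alpha>))))"
proof
  show "\<forall>(VE :: 'v set) VA E Ef \<alpha> v.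
            fair_arena VE VA E Ef \<and> omega_regular (VE \<union> VA) \<alpha> \<and> v \<in> VE \<union> VA \<longrightarrow>
            (\<exists>s. strategy VE E s \<and> (\<forall>t. strategy VA E t \<longrightarrow>
                fair VE Ef (play VE s t v) \<and> (fair VA Ef (play VE s t v) \<longrightarrow> play VE s t v \<in> \<alpha>)))
            \<longrightarrow>
            (\<exists>s. strategy VE E s \<and> (\<forall>t. strategy VA E t \<longrightarrow>
                fair VA Ef (play VE s t v) \<longrightarrow> fair VE Ef (play VE s t v) \<and> play VE s t v \<in> \<alpha>))"
    apply (intro allI impI)
    apply (elim exE conjE)
    subgoal for VE VA E Ef al v s
      by (rule exI[of _ s]) simp
    done
  show "\<exists>(VE :: nat set) VA E Ef \<alpha> v.
            fair_arena VE VA E Ef \<and> omega_regular (VE \<union> VA) \<alpha> \<and> v \<in> VE \<union> VA \<and>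
            (\<exists>s. strategy VE E s \<and> (\<forall>t. strategy VA E t \<longrightarrow>
                fair VA Ef (play VE s t v) \<longrightarrow> fair VE Ef (play VE s t v) \<and> play VE s t v \<in> \<alpha>)) \<and>
            \<not> (\<exists>s. strategy VE E s \<and> (\<forall>t. strategy VA E t \<longrightarrow>
                fair VE Ef (play VE s t v) \<and> (fair VA Ef (play VE s t v) \<longrightarrow> play VE s t v \<in> \<alpha>)))"
    apply (rule exI[of _ "{1,2,3}"], rule exI[of _ "{0}"], rule exI[of _ EEx], rule exI[of _ EfEx],
           rule exI[of _ alEx], rule exI[of _ 0])
    apply (intro conjI arena_ex omega_ex)
      apply simp
     apply (rule exI[of _ sEx], rule conjI[OF strat_s], intro allI impI)
     apply (erule part2_pos[THEN mp], assumption)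
    apply (rule notI, elim exE conjE)
    subgoal for s
      using part2_neg[of s] by auto
    done
qed

end
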